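(* Let $\mathcal{R}$ be a set of rules on a finite set $Q$. Then $\mathcal{K}(\mathcal{R})=\mathcal{A}(\mathcal{R})$ if and only if for every pair of nontrivial implicates $(A,q)$, $(A',q')$ of $\mathcal{K}(\mathcal{R})$, both $((A\cup A')\setminus\{q,q'\},q)$ and $((A\cup A')\setminus\{q,q'\},q')$ are implicates of $\mathcal{K}(\mathcal{R})$.
   Context: A rule on $Q$ is a pair $(A,q)$ with $A\subseteq Q$, $q\in Q$; it is nontrivial if $q\notin A$. It accepts $Y\subseteq Q$ if $q\in Y$ implies $Y\cap A\neq\emptyset$. $\mathcal{K}(\mathcal{R})$ is the family of subsets accepted by all rules of $\mathcal{R}$, and $\mathcal{A}(\mathcal{R})$ is the family of $K\in\mathcal{K}(\mathcal{R})$ for which there is a sequence $\emptyset=Y_0\subseteq\dots\subseteq Y_k=K$ of members of $\mathcal{K}(\mathcal{R})$ with $|Y_{i+1}\setminus Y_i|=1$. A rule is an implicate of a family $\mathcal{F}$ if it accepts every member of $\mathcal{F}$. *)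

theory Defs
  imports Main
begin

type_synonym 'a rule = "'a set \<times> 'a"

definition rule_on :: "'a set \<Rightarrow> 'a rule \<Rightarrow> bool" where
  "rule_on Q r \<longleftrightarrow> fst r \<subseteq> Q \<and> snd r \<in> Q"

definition nontrivial :: "'a rule \<Rightarrow> bool" where
  "nontrivial r \<longleftrightarrow> snd r \<notin> fst r"

definition accepts :: "'a rule \<Rightarrow> 'a set \<Rightarrow> bool" where
  "accepts r Y \<longleftrightarrow> (snd r \<in> Y \<longrightarrow> Y \<inter> fst r \<noteq> {})"

definition KR :: "'a set \<Rightarrow> 'a rule set \<Rightarrow> 'a set set" where
  "KR Q R = {Y. Y \<subseteq> Q \<and> (\<forall>r\<in>R. accepts r Y)}"

definition AR :: "'a set \<Rightarrow> 'a rule set \<Rightarrow> 'a set set" where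
  "AR Q R = {K. K \<in> KR Q R \<and>
     (\<exists>k Y. Y 0 = {} \<and> Y k = K \<and> (\<forall>i\<le>k. Y i \<in> KR Q R) \<and>
            (\<forall>i<k. Y i \<subseteq> Y (Suc i) \<and> card (Y (Suc i) - Y i) = 1))}"

definition implicate :: "'a set \<Rightarrow> 'a rule \<Rightarrow> 'a set set \<Rightarrow> bool" where
  "implicate Q r F \<longleftrightarrow> rule_on Q r \<and> (\<forall>Y\<in>F. accepts r Y)"

end

theory Submission
  imports Defs
begin

lemma AR_sub: "AR Q R \<subseteq> KR Q R" unfolding AR_def by auto

lemma access:
  assumes fin: "finite Q"
    and step: "\<forall>K\<in>KR Q R. K \<noteq> {} \<longrightarrow> (\<exists>x\<in>K. K - {x} \<in> KR Q R)"
  shows "K \<in> KR Q R \<Longrightarrow> K \<in> AR Q R"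
proof (induction K rule: measure_induct_rule[of card])
  case (less K)
  have finK: "finite K" using less.prems fin unfolding KR_def by (auto intro: finite_subset)
  show ?case
  proof (cases "K = {}")
    case True
    have ex: "\<exists>k Y. Y 0 = {} \<and> Y k = K \<and> (\<forall>i\<le>k. Y i \<in> KR Q R) \<and>
            (\<forall>i<k. Y i \<subseteq> Y (Suc i) \<and> card (Y (Suc i) - Y i) = 1)"
      apply (rule exI[of _ 0])
      apply (rule exI[of _ "\<lambda>_. {}"])
      using less.prems True by simp
    show ?thesis using less.prems ex unfolding AR_def mem_Collect_eq by (intro conjI)
  next
    case False
    have "\<exists>x\<in>K. K - {x} \<in> KR Q R" using step less.prems False by auto
    then obtain x where x: "x \<in> K" "K - {x} \<in> KR Q R" by blast
    have "card (K - {x}) < card K" using x finK by (meson card_Diff1_less)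
    then have "K - {x} \<in> AR Q R" using less.IH x by blast
    then obtain k Y where Y: "Y 0 = {}" "Y k = K - {x}" "\<forall>i\<le>k. Y i \<in> KR Q R"
      "\<forall>i<k. Y i \<subseteq> Y (Suc i) \<and> card (Y (Suc i) - Y i) = 1"
      unfolding AR_def by blast
    define Y' where "Y' = (\<lambda>i. if i \<le> k then Y i else K)"
    have "Y' 0 = {}" using Y by (simp add: Y'_def)
    moreover have "Y' (Suc k) = K" by (simp add: Y'_def)
    moreover have "\<forall>i\<le>Suc k. Y' i \<in> KR Q R" using Y less.prems by (auto simp: Y'_def)
    moreover have "\<forall>i<Suc k. Y' i \<subseteq> Y' (Suc i) \<and> card (Y' (Suc i) - Y' i) = 1"
    proof (intro allI impI)
      fix i assume i: "i < Suc k"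
      show "Y' i \<subseteq> Y' (Suc i) \<and> card (Y' (Suc i) - Y' i) = 1"
      proof (cases "i < k")
        case True then show ?thesis using Y by (auto simp: Y'_def)
      next
        case False
        then have "i = k" using i by simp
        moreover have "K - (K - {x}) = {x}" using x by auto
        ultimately show ?thesis using Y by (auto simp: Y'_def)
      qed
    qed
    ultimately have ex: "\<exists>k Y. Y 0 = {} \<and> Y k = K \<and> (\<forall>i\<le>k. Y i \<in> KR Q R) \<and>
            (\<forall>i<k. Y i \<subseteq> Y (Suc i) \<and> card (Y (Suc i) - Y i) = 1)" by blast
    show ?thesis using less.prems ex unfolding AR_def mem_Collect_eq by (intro conjI)
  qed
qed

lemma chain_meet:
  assumes A: "implicate Q (A, q) (KR Q R)" "nontrivial (A, q)"
    and A': "implicate Q (A', q') (KR Q R)" "nontrivial (A', q')"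
    and Y: "Y 0 = {}" "\<forall>i\<le>k. Y i \<in> KR Q R"
      "\<forall>i<k. Y i \<subseteq> Y (Suc i) \<and> card (Y (Suc i) - Y i) = 1"
  shows "j \<le> k \<Longrightarrow> Y j \<inter> {q, q'} \<noteq> {} \<Longrightarrow> Y j \<inter> ((A \<union> A') - {q, q'}) \<noteq> {}"
proof (induction j)
  case 0 then show ?case using Y by simp
next
  case (Suc j)
  have jk: "j < k" using Suc.prems by simp
  have sub: "Y j \<subseteq> Y (Suc j)" using Y jk by blast
  show ?case
  proof (cases "Y j \<inter> {q, q'} = {}")
    case False
    then show ?thesis using Suc.IH jk sub by auto
  next
    case True
    obtain z where z: "Y (Suc j) - Y j = {z}" using Y jk by (meson card_1_singletonE)
    have YS: "Y (Suc j) = insert z (Y j)" using z sub by auto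
    have zq: "z = q \<or> z = q'" using Suc.prems True YS by auto
    have KS: "Y (Suc j) \<in> KR Q R" using Y Suc.prems by blast
    show ?thesis
    proof (cases "z = q")
      case True
      have "Y (Suc j) \<inter> A \<noteq> {}" using A(1) KS YS True
        unfolding implicate_def accepts_def by auto
      then obtain w where w: "w \<in> Y (Suc j)" "w \<in> A" by blast
      have "w \<noteq> q" using w A(2) unfolding nontrivial_def by auto
      moreover have "w \<noteq> q'" using w YS \<open>Y j \<inter> {q, q'} = {}\<close> True \<open>w \<noteq> q\<close> by auto
      ultimately show ?thesis using w by auto
    next
      case False
      then have zq': "z = q'" using zq by simp
      have "Y (Suc j) \<inter> A' \<noteq> {}" using A'(1) KS YS zq'
        unfolding implicate_def accepts_def by auto
      then obtain w where w: "w \<in> Y (Suc j)" "w \<in> A'" by blast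
      have "w \<noteq> q'" using w A'(2) unfolding nontrivial_def by auto
      moreover have "w \<noteq> q" using w YS \<open>Y j \<inter> {q, q'} = {}\<close> zq' \<open>w \<noteq> q'\<close> by auto
      ultimately show ?thesis using w by auto
    qed
  qed
qed

lemma dir1:
  assumes eq: "KR Q R = AR Q R"
    and A: "implicate Q (A, q) (KR Q R)" "nontrivial (A, q)"
    and A': "implicate Q (A', q') (KR Q R)" "nontrivial (A', q')"
  shows "implicate Q ((A \<union> A') - {q, q'}, q) (KR Q R)"
proof -
  have "accepts ((A \<union> A') - {q, q'}, q) Y" if YK: "Y \<in> KR Q R" for Y
  proof -
    have "Y \<in> AR Q R" using eq YK by simp
    then obtain k Ys where Ys: "Ys 0 = {}" "Ys k = Y" "\<forall>i\<le>k. Ys i \<in> KR Q R"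
      "\<forall>i<k. Ys i \<subseteq> Ys (Suc i) \<and> card (Ys (Suc i) - Ys i) = 1"
      unfolding AR_def by blast
    show ?thesis unfolding accepts_def
      using chain_meet[OF A A' Ys(1) Ys(3) Ys(4), of k] Ys(2) by auto
  qed
  moreover have "rule_on Q ((A \<union> A') - {q, q'}, q)"
    using A A' unfolding implicate_def rule_on_def by auto
  ultimately show ?thesis unfolding implicate_def by auto
qed

theorem lemma3p10:
  fixes Q :: "'a set" and R :: "'a rule set"
  assumes "finite Q" and "\<forall>r\<in>R. rule_on Q r"
  shows "KR Q R = AR Q R \<longleftrightarrow>
    (\<forall>A q A' q'.
       implicate Q (A, q) (KR Q R) \<and> nontrivial (A, q) \<and>
       implicate Q (A', q') (KR Q R) \<and> nontrivial (A', q') \<longrightarrow>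
       implicate Q ((A \<union> A') - {q, q'}, q) (KR Q R) \<and>
       implicate Q ((A \<union> A') - {q, q'}, q') (KR Q R))"
proof
  assume eq: "KR Q R = AR Q R"
  show "\<forall>A q A' q'.
       implicate Q (A, q) (KR Q R) \<and> nontrivial (A, q) \<and>
       implicate Q (A', q') (KR Q R) \<and> nontrivial (A', q') \<longrightarrow>
       implicate Q ((A \<union> A') - {q, q'}, q) (KR Q R) \<and>
       implicate Q ((A \<union> A') - {q, q'}, q') (KR Q R)"
  proof (intro allI impI conjI)
    fix A q A' q'
    assume h: "implicate Q (A, q) (KR Q R) \<and> nontrivial (A, q) \<and>
       implicate Q (A', q') (KR Q R) \<and> nontrivial (A', q')"
    show "implicate Q ((A \<union> A') - {q, q'}, q) (KR Q R)"
      using dir1[OF eq] h by blast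
    have "implicate Q ((A' \<union> A) - {q', q}, q') (KR Q R)"
      using dir1[OF eq] h by blast
    moreover have "(A' \<union> A) - {q', q} = (A \<union> A') - {q, q'}" by auto
    ultimately show "implicate Q ((A \<union> A') - {q, q'}, q') (KR Q R)" by simp
  qed
next
  assume Cond: "\<forall>A q A' q'.
       implicate Q (A, q) (KR Q R) \<and> nontrivial (A, q) \<and>
       implicate Q (A', q') (KR Q R) \<and> nontrivial (A', q') \<longrightarrow>
       implicate Q ((A \<union> A') - {q, q'}, q) (KR Q R) \<and>
       implicate Q ((A \<union> A') - {q, q'}, q') (KR Q R)"
  have step: "\<forall>K\<in>KR Q R. K \<noteq> {} \<longrightarrow> (\<exists>x\<in>K. K - {x} \<in> KR Q R)"
  proof (intro ballI impI, rule ccontr)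
    fix K assume KK: "K \<in> KR Q R" and ne: "K \<noteq> {}"
      and no: "\<not> (\<exists>x\<in>K. K - {x} \<in> KR Q R)"
    have finK: "finite K" using KK assms(1) unfolding KR_def by (auto intro: finite_subset)
    define P where "P = (\<lambda>x y. x \<in> K \<and> y \<in> K \<and> (\<exists>B. implicate Q (B, y) (KR Q R)
                \<and> y \<notin> B \<and> B \<inter> K \<subseteq> {x}))"
    have succ: "\<exists>y. P x y" if xK: "x \<in> K" for x
    proof -
      have "K - {x} \<notin> KR Q R" using no xK by blast
      moreover have "K - {x} \<subseteq> Q" using KK unfolding KR_def by auto
      ultimately have "\<exists>r\<in>R. \<not> accepts r (K - {x})" unfolding KR_def by blast
      then obtain r where r: "r \<in> R" "\<not> accepts r (K - {x})" by blast
      have acK: "accepts r K" using KK r(1) unfolding KR_def by auto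
      obtain B y where ry: "r = (B, y)" by fastforce
      have y: "y \<in> K" "y \<noteq> x" "(K - {x}) \<inter> B = {}"
        using r(2) ry unfolding accepts_def by auto
      have BK: "B \<inter> K \<subseteq> {x}" using y(3) by auto
      have "x \<in> B" using acK ry y unfolding accepts_def by auto
      have "y \<notin> B" using BK y by auto
      moreover have "implicate Q (B, y) (KR Q R)"
        using assms(2) r(1) ry unfolding implicate_def KR_def by auto
      ultimately show ?thesis unfolding P_def using xK y BK by blast
    qed
    have irr: "\<not> P x x" for x
    proof
      assume "P x x"
      then obtain B where B: "x \<in> K" "implicate Q (B, x) (KR Q R)" "x \<notin> B" "B \<inter> K \<subseteq> {x}"
        unfolding P_def by blast
      have "K \<inter> B \<noteq> {}" using B KK unfolding implicate_def accepts_def by auto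
      then show False using B by auto
    qed
    have tr: "P x z" if h1: "P x y" and h2: "P y z" for x y z
    proof -
      obtain B where B: "x \<in> K" "y \<in> K" "implicate Q (B, y) (KR Q R)" "y \<notin> B" "B \<inter> K \<subseteq> {x}"
        using h1 unfolding P_def by blast
      obtain C where C: "z \<in> K" "implicate Q (C, z) (KR Q R)" "z \<notin> C" "C \<inter> K \<subseteq> {y}"
        using h2 unfolding P_def by blast
      have "implicate Q ((B \<union> C) - {y, z}, z) (KR Q R)"
        proof -
        have "nontrivial (B, y)" "nontrivial (C, z)" using B C unfolding nontrivial_def by auto
        then show ?thesis using Cond[rule_format, of B y C z] B(3) C(2) by blast
      qed
      moreover have "((B \<union> C) - {y, z}) \<inter> K \<subseteq> {x}" using B C by auto
      ultimately show ?thesis unfolding P_def using B C by blast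
    qed
    define r where "r = {(x, y). P x y}"
    have rK: "r \<subseteq> K \<times> K" unfolding r_def P_def by auto
    have "finite r" using rK finK by (meson finite_SigmaI finite_subset)
    moreover have "trans r" unfolding r_def trans_def using tr by blast
    then have rr: "r\<^sup>+ = r" by (rule trancl_id)
    have "acyclic r" unfolding acyclic_def rr
    proof
      fix x show "(x, x) \<notin> r" unfolding r_def using irr by simp
    qed
    ultimately have "wf (r\<inverse>)" by (rule finite_acyclic_wf_converse)
    obtain z0 where "z0 \<in> K" using ne by blast
    obtain z where z: "z \<in> K" "\<And>y. (y, z) \<in> r\<inverse> \<Longrightarrow> y \<notin> K"
      using wfE_min[OF \<open>wf (r\<inverse>)\<close> \<open>z0 \<in> K\<close>] by blast
    obtain y where Pzy: "P z y" using succ z(1) by blast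
    then have "y \<in> K" unfolding P_def by blast
    moreover have "(y, z) \<in> r\<inverse>" using Pzy unfolding r_def by simp
    ultimately show False using z(2) by blast
  qed
  show "KR Q R = AR Q R"
    using access[OF assms(1) step] AR_sub by blast
qed

end
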